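(* Let $B:[0,T]\to\mathbb R$ and $B_u:[0,T]\to\mathbb R$ be solutions of the constrained and unconstrained ODEs of the context, and let $\pi^\ast,\pi_u,\pi_M$ be as in the context. If $\rho=0$ or $\pi_M\in[\alpha,\beta]$, then $\pi^\ast(t)=\mathrm{Cap}(\pi_u(t),\alpha,\beta)$ for all $t\in[0,T]$.
   Context: Parameters: $T>0$; $\eta,\kappa,\sigma>0$; $\rho\in(-1,1)$; $b<1$, $b\ne0$; $K=[\alpha,\beta]$, $-\infty\le\alpha<\beta\le\infty$; $\delta_K(x)=-\alpha x\mathbf 1_{\{x>0\}}-\beta x\mathbf 1_{\{x<0\}}$. $B_-=\frac{(1-b)\alpha-\eta}\sigma$, $B_+=\frac{(1-b)\beta-\eta}\sigma$; $r_0=-\frac b{2(1-b)}\eta^2$, $r_1=\frac b{1-b}\eta\sigma\rho-\kappa$, $r_2=\sigma^2(1+\frac b{1-b}\rho^2)$. Constrained ODE: $B'(\tau)=-\kappa B+\frac12\sigma^2B^2+\frac12\frac b{1-b}\inf_{\lambda\in\mathbb R}(2(1-b)\delta_K(\lambda)+(\eta+\lambda+\sigma\rho B)^2)$, $B(0)=0$. Unconstrained ODE: $B_u'(\tau)=-r_0+r_1B_u+\frac12r_2B_u^2$, $B_u(0)=0$. $\lambda^\ast(B)=[(1-b)\alpha-(\eta+\sigma\rho B)]\mathbf 1_{\{\rho B<B_-\}}+[(1-b)\beta-(\eta+\sigma\rho B)]\mathbf 1_{\{\rho B>B_+\}}$; $\pi^\ast(t)=\frac1{1-b}(\eta+\lambda^\ast(B(T-t))+\sigma\rho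 B(T-t))$; $\pi_u(t)=\frac1{1-b}(\eta+\sigma\rho B_u(T-t))$; $\pi_M=\frac\eta{1-b}$; $\mathrm{Cap}(x,\alpha,\beta)=\alpha$ if $x<\alpha$, $x$ if $\alpha\le x\le\beta$, $\beta$ if $x>\beta$. *)

theory Defs
  imports "HOL-Analysis.Analysis" "HOL-Library.Extended_Real"
begin

text \<open>The bounds alpha, beta of K = [alpha, beta] may be infinite, so they are extended reals.\<close>

definition deltaK :: "ereal \<Rightarrow> ereal \<Rightarrow> real \<Rightarrow> ereal" where
  "deltaK \<alpha> \<beta> x =
     (if x > 0 then - \<alpha> * ereal x else if x < 0 then - \<beta> * ereal x else 0)"

definition B_minus :: "real \<Rightarrow> real \<Rightarrow> real \<Rightarrow> ereal \<Rightarrow> ereal" where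
  "B_minus b \<eta> \<sigma> \<alpha> = (ereal (1 - b) * \<alpha> - ereal \<eta>) / ereal \<sigma>"

definition B_plus :: "real \<Rightarrow> real \<Rightarrow> real \<Rightarrow> ereal \<Rightarrow> ereal" where
  "B_plus b \<eta> \<sigma> \<beta> = (ereal (1 - b) * \<beta> - ereal \<eta>) / ereal \<sigma>"

definition r0 :: "real \<Rightarrow> real \<Rightarrow> real" where
  "r0 b \<eta> = - b / (2 * (1 - b)) * \<eta>^2"

definition r1 :: "real \<Rightarrow> real \<Rightarrow> real \<Rightarrow> real \<Rightarrow> real \<Rightarrow> real" where
  "r1 b \<eta> \<sigma> \<rho> \<kappa> = b / (1 - b) * \<eta> * \<sigma> * \<rho> - \<kappa>"

definition r2 :: "real \<Rightarrow> real \<Rightarrow> real \<Rightarrow> real" where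
  "r2 b \<sigma> \<rho> = \<sigma>^2 * (1 + b / (1 - b) * \<rho>^2)"

text \<open>Right-hand side of the constrained ODE (the infimum is finite; it is taken in ereal
  since delta_K may be +infinity).\<close>
definition constr_rhs ::
  "real \<Rightarrow> real \<Rightarrow> real \<Rightarrow> real \<Rightarrow> real \<Rightarrow> ereal \<Rightarrow> ereal \<Rightarrow> real \<Rightarrow> real" where
  "constr_rhs b \<eta> \<kappa> \<sigma> \<rho> \<alpha> \<beta> B =
     - \<kappa> * B + 1/2 * \<sigma>^2 * B^2
     + 1/2 * (b / (1 - b)) *
       real_of_ereal (INF l\<in>UNIV. ereal (2 * (1 - b)) * deltaK \<alpha> \<beta> l
                                  + ereal ((\<eta> + l + \<sigma> * \<rho> * B)^2))"

definition unconstr_rhs :: "real \<Rightarrow> real \<Rightarrow> real \<Rightarrow> real \<Rightarrow> real \<Rightarrow> real \<Rightarrow> real" where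
  "unconstr_rhs b \<eta> \<kappa> \<sigma> \<rho> B =
     - r0 b \<eta> + r1 b \<eta> \<sigma> \<rho> \<kappa> * B + 1/2 * r2 b \<sigma> \<rho> * B^2"

text \<open>lambda^*(B); when an indicator is true the corresponding bound is finite.\<close>
definition lambda_star :: "real \<Rightarrow> real \<Rightarrow> real \<Rightarrow> real \<Rightarrow> ereal \<Rightarrow> ereal \<Rightarrow> real \<Rightarrow> real" where
  "lambda_star b \<eta> \<sigma> \<rho> \<alpha> \<beta> B =
     (if ereal (\<rho> * B) < B_minus b \<eta> \<sigma> \<alpha>
      then real_of_ereal (ereal (1 - b) * \<alpha>) - (\<eta> + \<sigma> * \<rho> * B) else 0)
   + (if ereal (\<rho> * B) > B_plus b \<eta> \<sigma> \<beta>
      then real_of_ereal (ereal (1 - b) * \<beta>) - (\<eta> + \<sigma> * \<rho> * B) else 0)"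

definition pi_star ::
  "real \<Rightarrow> real \<Rightarrow> real \<Rightarrow> real \<Rightarrow> ereal \<Rightarrow> ereal \<Rightarrow> real \<Rightarrow> (real \<Rightarrow> real) \<Rightarrow> real \<Rightarrow> real" where
  "pi_star b \<eta> \<sigma> \<rho> \<alpha> \<beta> T B t =
     1 / (1 - b) * (\<eta> + lambda_star b \<eta> \<sigma> \<rho> \<alpha> \<beta> (B (T - t)) + \<sigma> * \<rho> * B (T - t))"

definition pi_u :: "real \<Rightarrow> real \<Rightarrow> real \<Rightarrow> real \<Rightarrow> real \<Rightarrow> (real \<Rightarrow> real) \<Rightarrow> real \<Rightarrow> real" where
  "pi_u b \<eta> \<sigma> \<rho> T Bu t = 1 / (1 - b) * (\<eta> + \<sigma> * \<rho> * Bu (T - t))"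

definition pi_M :: "real \<Rightarrow> real \<Rightarrow> real" where
  "pi_M b \<eta> = \<eta> / (1 - b)"

definition Cap :: "real \<Rightarrow> ereal \<Rightarrow> ereal \<Rightarrow> real" where
  "Cap x \<alpha> \<beta> = (if ereal x < \<alpha> then real_of_ereal \<alpha>
                   else if ereal x \<le> \<beta> then x else real_of_ereal \<beta>)"

end

theory Submission
  imports Defs
begin

lemma pos_stays:
  fixes D D' :: "real \<Rightarrow> real" and a b L :: real
  assumes ab: "a \<le> b"
    and der: "\<And>t. t \<in> {a..b} \<Longrightarrow> (D has_real_derivative D' t) (at t within {a..b})"
    and Da: "D a \<le> 0"
    and lip: "\<And>t. t \<in> {a..b} \<Longrightarrow> D t > 0 \<Longrightarrow> D t * D' t \<le> L * (D t)^2"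
  shows "\<forall>t\<in>{a..b}. D t \<le> 0"
proof (rule ccontr)
  assume "\<not> ?thesis"
  then obtain t1 where t1: "t1 \<in> {a..b}" "D t1 > 0" by force
  have contD: "continuous_on {a..b} D"
    using der by (rule DERIV_continuous_on)
  have cont1: "continuous_on {a..t1} D"
    using contD t1 by (auto intro: continuous_on_subset)
  define Z where "Z = {a..t1} \<inter> D -` {..0}"
  have "closed Z" unfolding Z_def
    by (rule continuous_closed_preimage[OF cont1]) auto
  hence "compact ({a..t1} \<inter> Z)" by (intro compact_Int_closed) auto
  moreover have "{a..t1} \<inter> Z = Z" unfolding Z_def by auto
  ultimately have "compact Z" by simp
  moreover have "a \<in> Z" using t1 Da unfolding Z_def by auto
  ultimately obtain s where s: "s \<in> Z" "\<And>t. t \<in> Z \<Longrightarrow> t \<le> s"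
    using compact_attains_sup[of Z] by blast
  have Ds: "D s \<le> 0" and as: "a \<le> s" and st: "s \<le> t1" using s(1) unfolding Z_def by auto
  have "s < t1" using Ds t1 st by (cases "s = t1") auto
  have "continuous_on {s..t1} D" using cont1 as by (auto intro: continuous_on_subset)
  then obtain u where u: "s \<le> u" "u \<le> t1" "D u = 0"
    using IVT'[of D s 0 t1] Ds t1 st by auto
  have "u \<in> Z" using u as unfolding Z_def by auto
  hence "u = s" using s(2) u by force
  hence Ds0: "D s = 0" using u by simp
  have pos: "D t > 0" if "s < t" "t \<le> t1" for t
  proof (rule ccontr)
    assume "\<not> D t > 0"
    hence "t \<in> Z" using that as unfolding Z_def by auto
    thus False using s(2) that by force
  qed
  define w where "w t = (D t)^2 * exp (-2*L*t)" for t
  have contw: "continuous_on {s..t1} w"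
    unfolding w_def using \<open>continuous_on {s..t1} D\<close>
    by (intro continuous_intros) auto
  have "w s \<ge> w t1"
  proof (rule DERIV_nonpos_imp_decreasing_open[OF st _ contw])
    fix x assume x: "s < x" "x < t1"
    have xab: "x \<in> {a..b}" using x as t1 by auto
    have "at x within {a..b} = at x" using x as t1 by (intro at_within_Icc_at) auto
    hence dx: "(D has_real_derivative D' x) (at x)" using der[OF xab] by simp
    have "(w has_real_derivative (2 * D x * D' x * exp (-2*L*x) + (D x)^2 * (exp (-2*L*x) * (-2*L)))) (at x)"
      unfolding w_def
      by (auto intro!: derivative_eq_intros dx simp: power2_eq_square)
    moreover have "2 * D x * D' x * exp (-2*L*x) + (D x)^2 * (exp (-2*L*x) * (-2*L)) \<le> 0"
    proof -
      have "D x * D' x \<le> L * (D x)^2" using lip[OF xab] pos x by auto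
      hence "2 * (D x * D' x) - 2 * L * (D x)^2 \<le> 0" by simp
      hence "exp (-2*L*x) * (2 * (D x * D' x) - 2 * L * (D x)^2) \<le> 0"
        by (simp add: mult_nonneg_nonpos)
      thus ?thesis by (simp add: algebra_simps)
    qed
    ultimately show "\<exists>y. (w has_real_derivative y) (at x) \<and> y \<le> 0" by blast
  qed
  moreover have "w s = 0" using Ds0 unfolding w_def by simp
  moreover have "w t1 > 0" using t1 unfolding w_def by simp
  ultimately show False by simp
qed

lemma inv_up:
  fixes Z H :: "real \<Rightarrow> real"
  assumes sT: "s \<le> T'"
    and der: "\<And>t. t \<in> {s..T'} \<Longrightarrow> (Z has_real_derivative H (Z t)) (at t within {s..T'})"
    and bnd: "\<And>t. t \<in> {s..T'} \<Longrightarrow> \<bar>Z t\<bar> \<le> M" and eM: "\<bar>e\<bar> \<le> M"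
    and lip: "\<And>u v. \<bar>u\<bar> \<le> M \<Longrightarrow> \<bar>v\<bar> \<le> M \<Longrightarrow> \<bar>H u - H v\<bar> \<le> L * \<bar>u - v\<bar>"
    and He: "H e \<ge> 0" and Zs: "e \<le> Z s"
  shows "\<forall>t\<in>{s..T'}. e \<le> Z t"
proof -
  have "\<forall>t\<in>{s..T'}. (\<lambda>t. e - Z t) t \<le> 0"
  proof (rule pos_stays[where D' = "\<lambda>t. - H (Z t)" and L = L])
    fix t assume t: "t \<in> {s..T'}"
    show "((\<lambda>t. e - Z t) has_real_derivative - H (Z t)) (at t within {s..T'})"
      using der[OF t] by (auto intro!: derivative_eq_intros)
  next
    fix t assume t: "t \<in> {s..T'}" and pos: "e - Z t > 0"
    have l: "\<bar>H e - H (Z t)\<bar> \<le> L * \<bar>e - Z t\<bar>" using lip[OF eM bnd[OF t]] .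
    have "(e - Z t) * (- H (Z t)) \<le> (e - Z t) * (H e - H (Z t))"
      using pos He by (intro mult_left_mono) auto
    also have "\<dots> \<le> (e - Z t) * (L * \<bar>e - Z t\<bar>)"
      using pos l by (intro mult_left_mono) auto
    also have "\<dots> = L * (e - Z t)^2" using pos by (simp add: power2_eq_square)
    finally show "(e - Z t) * (- H (Z t)) \<le> L * (e - Z t)^2" .
  qed (use sT Zs in auto)
  thus ?thesis by auto
qed

lemma inv_down:
  fixes Z H :: "real \<Rightarrow> real"
  assumes sT: "s \<le> T'"
    and der: "\<And>t. t \<in> {s..T'} \<Longrightarrow> (Z has_real_derivative H (Z t)) (at t within {s..T'})"
    and bnd: "\<And>t. t \<in> {s..T'} \<Longrightarrow> \<bar>Z t\<bar> \<le> M" and eM: "\<bar>e\<bar> \<le> M"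
    and lip: "\<And>u v. \<bar>u\<bar> \<le> M \<Longrightarrow> \<bar>v\<bar> \<le> M \<Longrightarrow> \<bar>H u - H v\<bar> \<le> L * \<bar>u - v\<bar>"
    and He: "H e \<le> 0" and Zs: "Z s \<le> e"
  shows "\<forall>t\<in>{s..T'}. Z t \<le> e"
proof -
  have "\<forall>t\<in>{s..T'}. (\<lambda>t. Z t - e) t \<le> 0"
  proof (rule pos_stays[where D' = "\<lambda>t. H (Z t)" and L = L])
    fix t assume t: "t \<in> {s..T'}"
    show "((\<lambda>t. Z t - e) has_real_derivative H (Z t)) (at t within {s..T'})"
      using der[OF t] by (auto intro!: derivative_eq_intros)
  next
    fix t assume t: "t \<in> {s..T'}" and pos: "Z t - e > 0"
    have l: "\<bar>H (Z t) - H e\<bar> \<le> L * \<bar>Z t - e\<bar>" using lip[OF bnd[OF t] eM] .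
    have "(Z t - e) * (H (Z t)) \<le> (Z t - e) * (H (Z t) - H e)"
      using pos He by (intro mult_left_mono) auto
    also have "\<dots> \<le> (Z t - e) * (L * \<bar>Z t - e\<bar>)"
      using pos l by (intro mult_left_mono) auto
    also have "\<dots> = L * (Z t - e)^2" using pos by (simp add: power2_eq_square)
    finally show "(Z t - e) * (H (Z t)) \<le> L * (Z t - e)^2" .
  qed (use sT Zs in auto)
  thus ?thesis by auto
qed

lemma uniq:
  fixes X Y F :: "real \<Rightarrow> real"
  assumes sT: "0 \<le> s"
    and dX: "\<And>t. t \<in> {0..s} \<Longrightarrow> (X has_real_derivative F (X t)) (at t within {0..s})"
    and dY: "\<And>t. t \<in> {0..s} \<Longrightarrow> (Y has_real_derivative F (Y t)) (at t within {0..s})"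
    and bnd: "\<And>t. t \<in> {0..s} \<Longrightarrow> \<bar>X t\<bar> \<le> M \<and> \<bar>Y t\<bar> \<le> M"
    and lip: "\<And>u v. \<bar>u\<bar> \<le> M \<Longrightarrow> \<bar>v\<bar> \<le> M \<Longrightarrow> \<bar>F u - F v\<bar> \<le> L * \<bar>u - v\<bar>"
    and X0: "X 0 = Y 0"
  shows "\<forall>t\<in>{0..s}. X t = Y t"
proof -
  have key: "(X t - Y t) * (F (X t) - F (Y t)) \<le> L * (X t - Y t)^2" if t: "t \<in> {0..s}" for t
  proof -
    have l: "\<bar>F (X t) - F (Y t)\<bar> \<le> L * \<bar>X t - Y t\<bar>" using bnd[OF t] lip by blast
    have "(X t - Y t) * (F (X t) - F (Y t)) \<le> \<bar>X t - Y t\<bar> * \<bar>F (X t) - F (Y t)\<bar>"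
      by (metis abs_ge_self abs_mult)
    also have "\<dots> \<le> \<bar>X t - Y t\<bar> * (L * \<bar>X t - Y t\<bar>)" using l by (intro mult_left_mono) auto
    also have "\<dots> = L * (X t - Y t)^2" by (simp add: power2_eq_square)
    finally show ?thesis .
  qed
  have A: "\<forall>t\<in>{0..s}. (\<lambda>t. X t - Y t) t \<le> 0"
  proof (rule pos_stays[where D' = "\<lambda>t. F (X t) - F (Y t)" and L = L])
    fix t assume t: "t \<in> {0..s}"
    show "((\<lambda>t. X t - Y t) has_real_derivative F (X t) - F (Y t)) (at t within {0..s})"
      using dX[OF t] dY[OF t] by (auto intro!: derivative_eq_intros)
  qed (use sT X0 key in auto)
  have B: "\<forall>t\<in>{0..s}. (\<lambda>t. Y t - X t) t \<le> 0"
  proof (rule pos_stays[where D' = "\<lambda>t. F (Y t) - F (X t)" and L = L])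
    fix t assume t: "t \<in> {0..s}"
    show "((\<lambda>t. Y t - X t) has_real_derivative F (Y t) - F (X t)) (at t within {0..s})"
      using dX[OF t] dY[OF t] by (auto intro!: derivative_eq_intros)
  next
    fix t assume t: "t \<in> {0..s}"
    have "(Y t - X t) * (F (Y t) - F (X t)) = (X t - Y t) * (F (X t) - F (Y t))" by algebra
    also have "\<dots> \<le> L * (X t - Y t)^2" using key[OF t] .
    also have "\<dots> = L * (Y t - X t)^2" by algebra
    finally show "(Y t - X t) * (F (Y t) - F (X t)) \<le> L * (Y t - X t)^2" .
  qed (use sT X0 in auto)
  from A B show ?thesis by force
qed

definition loclip :: "(real \<Rightarrow> real) \<Rightarrow> bool" where
  "loclip F \<longleftrightarrow> (\<forall>M. \<exists>L. \<forall>u v. \<bar>u\<bar> \<le> M \<longrightarrow> \<bar>v\<bar> \<le> M \<longrightarrow> \<bar>F u - F v\<bar> \<le> L * \<bar>u - v\<bar>)"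

lemma cont_nbhd:
  fixes Y :: "real \<Rightarrow> real"
  assumes "continuous_on {0..T} Y" "p \<in> {0..T}" "\<epsilon> > 0"
  shows "\<exists>\<delta>>0. \<forall>t\<in>{0..T}. \<bar>t - p\<bar> < \<delta> \<longrightarrow> \<bar>Y t - Y p\<bar> < \<epsilon>"
  using assms unfolding continuous_on_iff dist_real_def by blast

lemma core:
  fixes X Y F G :: "real \<Rightarrow> real" and lo hi T :: real
  assumes T0: "0 \<le> T" and lohi: "lo < hi" and X0: "X 0 = Y 0" and Y0: "lo \<le> Y 0" "Y 0 \<le> hi"
    and dX: "\<And>t. t \<in> {0..T} \<Longrightarrow> (X has_real_derivative F (X t)) (at t within {0..T})"
    and dY: "\<And>t. t \<in> {0..T} \<Longrightarrow> (Y has_real_derivative G (Y t)) (at t within {0..T})"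
    and FG: "\<And>y. lo \<le> y \<Longrightarrow> y \<le> hi \<Longrightarrow> F y = G y"
    and lF: "loclip F" and lG: "loclip G"
  shows "\<forall>t\<in>{0..T}. (X t = Y t \<and> lo \<le> Y t \<and> Y t \<le> hi) \<or> (hi \<le> X t \<and> hi \<le> Y t) \<or> (X t \<le> lo \<and> Y t \<le> lo)"
proof -
  have cX: "continuous_on {0..T} X" using dX by (rule DERIV_continuous_on)
  have cY: "continuous_on {0..T} Y" using dY by (rule DERIV_continuous_on)
  have "continuous_on {0..T} (\<lambda>t. \<bar>X t\<bar> + \<bar>Y t\<bar>)" using cX cY by (intro continuous_intros)
  then obtain tm where "tm \<in> {0..T}" "\<And>t. t \<in> {0..T} \<Longrightarrow> \<bar>X t\<bar> + \<bar>Y t\<bar> \<le> \<bar>X tm\<bar> + \<bar>Y tm\<bar>"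
    using continuous_attains_sup[of "{0..T}" "\<lambda>t. \<bar>X t\<bar> + \<bar>Y t\<bar>"] T0 by auto
  then obtain M where bnd: "\<And>t. t \<in> {0..T} \<Longrightarrow> \<bar>X t\<bar> \<le> M \<and> \<bar>Y t\<bar> \<le> M"
  proof -
    assume tm: "\<And>t. t \<in> {0..T} \<Longrightarrow> \<bar>X t\<bar> + \<bar>Y t\<bar> \<le> \<bar>X tm\<bar> + \<bar>Y tm\<bar>"
      and th: "\<And>M. (\<And>t. t \<in> {0..T} \<Longrightarrow> \<bar>X t\<bar> \<le> M \<and> \<bar>Y t\<bar> \<le> M) \<Longrightarrow> thesis"
    show thesis
    proof (rule th)
      fix t assume t: "t \<in> {0..T}"
      show "\<bar>X t\<bar> \<le> \<bar>X tm\<bar> + \<bar>Y tm\<bar> \<and> \<bar>Y t\<bar> \<le> \<bar>X tm\<bar> + \<bar>Y tm\<bar>"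
        using tm[OF t] abs_ge_zero[of "X t"] abs_ge_zero[of "Y t"] by linarith
    qed
  qed
  obtain L1 where L1: "\<And>u v. \<bar>u\<bar> \<le> M \<Longrightarrow> \<bar>v\<bar> \<le> M \<Longrightarrow> \<bar>F u - F v\<bar> \<le> L1 * \<bar>u - v\<bar>"
    using lF unfolding loclip_def by blast
  obtain L2 where L2: "\<And>u v. \<bar>u\<bar> \<le> M \<Longrightarrow> \<bar>v\<bar> \<le> M \<Longrightarrow> \<bar>G u - G v\<bar> \<le> L2 * \<bar>u - v\<bar>"
    using lG unfolding loclip_def by blast
  define S where "S y \<longleftrightarrow> lo \<le> y \<and> y \<le> hi" for y
  have dXs: "(X has_real_derivative F (X t)) (at t within {s..T})" if "t \<in> {s..T}" "0 \<le> s" for s t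
    using dX[of t] that by (auto intro: has_field_derivative_subset)
  have dYs: "(Y has_real_derivative G (Y t)) (at t within {s..T})" if "t \<in> {s..T}" "0 \<le> s" for s t
    using dY[of t] that by (auto intro: has_field_derivative_subset)
  have un: "\<forall>t\<in>{0..s}. X t = Y t" if s: "s \<in> {0..T}" "\<forall>t\<in>{0..s}. S (Y t)" for s
  proof (rule uniq[where F = F and M = M and L = L1])
    fix t assume t: "t \<in> {0..s}"
    show "(X has_real_derivative F (X t)) (at t within {0..s})"
      using dX[of t] t s by (auto intro: has_field_derivative_subset)
    have "(Y has_real_derivative G (Y t)) (at t within {0..s})"
      using dY[of t] t s by (auto intro: has_field_derivative_subset)
    moreover have "G (Y t) = F (Y t)" using s t FG unfolding S_def by auto
    ultimately show "(Y has_real_derivative F (Y t)) (at t within {0..s})" by simp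
    show "\<bar>X t\<bar> \<le> M \<and> \<bar>Y t\<bar> \<le> M" using bnd t s by auto
  qed (use s X0 L1 in auto)
  show ?thesis
  proof (cases "\<forall>t\<in>{0..T}. S (Y t)")
    case True
    then show ?thesis using un[of T] T0 unfolding S_def by auto
  next
    case False
    define C where "C = {t\<in>{0..T}. \<not> S (Y t)}"
    have Cne: "C \<noteq> {}" using False unfolding C_def by auto
    have Cbdd: "bdd_below C" unfolding C_def by (rule bdd_belowI[of _ 0]) auto
    define s where "s = Inf C"
    have s0: "0 \<le> s" unfolding s_def using Cne by (intro cInf_greatest) (auto simp: C_def)
    obtain c where c: "c \<in> C" using Cne by blast
    have sT: "s \<le> T"
    proof -
      have "s \<le> c" unfolding s_def using c Cbdd by (rule cInf_lower)
      moreover have "c \<le> T" using c unfolding C_def by auto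
      ultimately show ?thesis by simp
    qed
    have before: "S (Y t)" if "t \<in> {0..T}" "t < s" for t
    proof (rule ccontr)
      assume "\<not> S (Y t)"
      hence "t \<in> C" using that unfolding C_def by auto
      hence "s \<le> t" unfolding s_def using Cbdd by (rule cInf_lower)
      thus False using that by simp
    qed
    have gap: False if "\<delta> > 0" "\<And>t. t \<in> {0..T} \<Longrightarrow> s \<le> t \<Longrightarrow> t < s + \<delta> \<Longrightarrow> S (Y t)" for \<delta>
    proof -
      have "s + \<delta> \<le> Inf C"
      proof (rule cInf_greatest[OF Cne])
        fix c assume c: "c \<in> C"
        have "s \<le> c" unfolding s_def using c Cbdd by (rule cInf_lower)
        moreover have "\<not> S (Y c)" "c \<in> {0..T}" using c unfolding C_def by auto
        ultimately show "s + \<delta> \<le> c" using that(2)[of c] by force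
      qed
      thus False using that(1) unfolding s_def by simp
    qed
    have sin: "s \<in> {0..T}" using s0 sT by auto
    have Ys: "S (Y s)"
    proof (cases "s = 0")
      case True thus ?thesis using Y0 unfolding S_def by simp
    next
      case False
      hence spos: "s > 0" using s0 by simp
      show ?thesis
      proof (rule ccontr)
        assume nS: "\<not> S (Y s)"
        define \<epsilon> where "\<epsilon> = (if Y s > hi then Y s - hi else lo - Y s)"
        have "\<epsilon> > 0" using nS unfolding \<epsilon>_def S_def by auto
        then obtain \<delta> where d: "\<delta> > 0" "\<And>t. t \<in> {0..T} \<Longrightarrow> \<bar>t - s\<bar> < \<delta> \<Longrightarrow> \<bar>Y t - Y s\<bar> < \<epsilon>"
          using cont_nbhd[OF cY sin] by blast
        define t where "t = max 0 (s - \<delta>/2)"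
        have t: "t \<in> {0..T}" "t < s" "\<bar>t - s\<bar> < \<delta>" using spos d(1) sT unfolding t_def by auto
        have "\<bar>Y t - Y s\<bar> < \<epsilon>" using d(2)[OF t(1) t(3)] .
        moreover have "S (Y t)" using before t by auto
        ultimately show False using nS unfolding \<epsilon>_def S_def by (auto split: if_splits)
      qed
    qed
    have "\<forall>t\<in>{0..s}. S (Y t)"
    proof
      fix t assume t: "t \<in> {0..s}"
      show "S (Y t)"
      proof (cases "t = s")
        case True thus ?thesis using Ys by simp
      next
        case False thus ?thesis using t sT by (intro before) auto
      qed
    qed
    hence eqs: "\<forall>t\<in>{0..s}. X t = Y t" using un[OF sin] by blast
    have early: "X t = Y t \<and> lo \<le> Y t \<and> Y t \<le> hi" if "t \<in> {0..T}" "t \<le> s" for t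
      using eqs that before[of t] Ys unfolding S_def by (cases "t = s") auto
    have bndS: "\<And>t. t \<in> {s..T} \<Longrightarrow> \<bar>X t\<bar> \<le> M \<and> \<bar>Y t\<bar> \<le> M" using bnd s0 by auto
    have YsM: "\<bar>Y s\<bar> \<le> M" using bnd sin by auto
    have Xs: "X s = Y s" using eqs s0 by auto
    consider "Y s = hi" | "Y s = lo" | "lo < Y s \<and> Y s < hi" using Ys unfolding S_def by force
    then show ?thesis
    proof cases
      case 1
      show ?thesis
      proof (cases "F hi \<ge> 0")
        case True
        have GY: "G hi \<ge> 0" using True FG[of hi] lohi by simp
        have iX: "\<forall>t\<in>{s..T}. hi \<le> X t"
          by (rule inv_up[OF sT, where H = F and M = M and L = L1])
             (use dXs s0 bndS YsM 1 L1 True Xs in auto)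
        have iY: "\<forall>t\<in>{s..T}. hi \<le> Y t"
          by (rule inv_up[OF sT, where H = G and M = M and L = L2])
             (use dYs s0 bndS YsM 1 L2 GY in auto)
        show ?thesis
        proof
          fix t assume t: "t \<in> {0..T}"
          show "(X t = Y t \<and> lo \<le> Y t \<and> Y t \<le> hi) \<or> (hi \<le> X t \<and> hi \<le> Y t) \<or> (X t \<le> lo \<and> Y t \<le> lo)"
          proof (cases "t \<le> s")
            case True thus ?thesis using early t by blast
          next
            case False thus ?thesis using iX iY t by auto
          qed
        qed
      next
        case False
        have GY: "G hi \<le> 0" using False FG[of hi] lohi by simp
        have iY: "\<forall>t\<in>{s..T}. Y t \<le> hi"
          by (rule inv_down[OF sT, where H = G and M = M and L = L2])
             (use dYs s0 bndS YsM 1 L2 GY in auto)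
        obtain \<delta> where d: "\<delta> > 0" "\<And>t. t \<in> {0..T} \<Longrightarrow> \<bar>t - s\<bar> < \<delta> \<Longrightarrow> \<bar>Y t - Y s\<bar> < hi - lo"
          using cont_nbhd[OF cY sin, of "hi - lo"] lohi by auto
        have "S (Y t)" if "t \<in> {0..T}" "s \<le> t" "t < s + \<delta>" for t
          using iY d(2)[of t] that 1 unfolding S_def by auto
        thus ?thesis using gap d(1) by blast
      qed
    next
      case 2
      show ?thesis
      proof (cases "F lo \<le> 0")
        case True
        have GY: "G lo \<le> 0" using True FG[of lo] lohi by simp
        have iX: "\<forall>t\<in>{s..T}. X t \<le> lo"
          by (rule inv_down[OF sT, where H = F and M = M and L = L1])
             (use dXs s0 bndS YsM 2 L1 True Xs in auto)
        have iY: "\<forall>t\<in>{s..T}. Y t \<le> lo"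
          by (rule inv_down[OF sT, where H = G and M = M and L = L2])
             (use dYs s0 bndS YsM 2 L2 GY in auto)
        show ?thesis
        proof
          fix t assume t: "t \<in> {0..T}"
          show "(X t = Y t \<and> lo \<le> Y t \<and> Y t \<le> hi) \<or> (hi \<le> X t \<and> hi \<le> Y t) \<or> (X t \<le> lo \<and> Y t \<le> lo)"
          proof (cases "t \<le> s")
            case True thus ?thesis using early t by blast
          next
            case False thus ?thesis using iX iY t by auto
          qed
        qed
      next
        case False
        have GY: "G lo \<ge> 0" using False FG[of lo] lohi by simp
        have iY: "\<forall>t\<in>{s..T}. lo \<le> Y t"
          by (rule inv_up[OF sT, where H = G and M = M and L = L2])
             (use dYs s0 bndS YsM 2 L2 GY in auto)
        obtain \<delta> where d: "\<delta> > 0" "\<And>t. t \<in> {0..T} \<Longrightarrow> \<bar>t - s\<bar> < \<delta> \<Longrightarrow> \<bar>Y t - Y s\<bar> < hi - lo"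
          using cont_nbhd[OF cY sin, of "hi - lo"] lohi by auto
        have "S (Y t)" if "t \<in> {0..T}" "s \<le> t" "t < s + \<delta>" for t
          using iY d(2)[of t] that 2 unfolding S_def by auto
        thus ?thesis using gap d(1) by blast
      qed
    next
      case 3
      obtain \<delta> where d: "\<delta> > 0" "\<And>t. t \<in> {0..T} \<Longrightarrow> \<bar>t - s\<bar> < \<delta> \<Longrightarrow> \<bar>Y t - Y s\<bar> < min (Y s - lo) (hi - Y s)"
        using cont_nbhd[OF cY sin, of "min (Y s - lo) (hi - Y s)"] 3 by auto
      have "S (Y t)" if "t \<in> {0..T}" "s \<le> t" "t < s + \<delta>" for t
        using d(2)[of t] that unfolding S_def by auto
      thus ?thesis using gap d(1) by blast
    qed
  qed
qed

lemma cap_in: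
  assumes "\<alpha> < \<beta>"
  shows "\<alpha> \<le> ereal (Cap z \<alpha> \<beta>) \<and> ereal (Cap z \<alpha> \<beta>) \<le> \<beta>"
  using assms by (cases \<alpha>; cases \<beta>) (auto simp: Cap_def)

lemma cap_id:
  assumes "\<alpha> \<le> ereal z" "ereal z \<le> \<beta>"
  shows "Cap z \<alpha> \<beta> = z"
  using assms by (auto simp: Cap_def)

lemma sq_le_aux: "0 \<le> (a::real) \<Longrightarrow> a \<le> b \<Longrightarrow> a^2 \<le> b^2"
  by (simp add: power_mono)

lemma cap_near:
  assumes "\<alpha> < \<beta>" "\<alpha> \<le> ereal q" "ereal q \<le> \<beta>"
  shows "(z - Cap z \<alpha> \<beta>)^2 \<le> (z - q)^2"
proof -
  consider "ereal z < \<alpha>" | "\<not> ereal z < \<alpha>" "ereal z \<le> \<beta>" | "\<not> ereal z < \<alpha>" "\<not> ereal z \<le> \<beta>" by blast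
  then show ?thesis
  proof cases
    case 1
    then obtain a where a: "\<alpha> = ereal a" using assms by (cases \<alpha>) auto
    have "Cap z \<alpha> \<beta> = a" using 1 a by (simp add: Cap_def)
    moreover have "z < a" "a \<le> q" using 1 a assms by auto
    ultimately show ?thesis using sq_le_aux[of "a - z" "q - z"] by (simp add: power2_commute)
  next
    case 2 thus ?thesis by (simp add: Cap_def)
  next
    case 3
    then obtain bb where a: "\<beta> = ereal bb" using assms by (cases \<beta>) auto
    have "Cap z \<alpha> \<beta> = bb" using 3 a by (simp add: Cap_def)
    moreover have "z > bb" "q \<le> bb" using 3 a assms by auto
    ultimately show ?thesis using sq_le_aux[of "z - bb" "z - q"] by simp
  qed
qed

lemma cap_bnd:
  assumes "\<alpha> < \<beta>" "\<alpha> \<le> ereal q" "ereal q \<le> \<beta>"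
  shows "\<bar>Cap z \<alpha> \<beta>\<bar> \<le> \<bar>z\<bar> + \<bar>q\<bar>"
proof -
  consider "ereal z < \<alpha>" | "\<not> ereal z < \<alpha>" "ereal z \<le> \<beta>" | "\<not> ereal z < \<alpha>" "\<not> ereal z \<le> \<beta>" by blast
  then show ?thesis
  proof cases
    case 1
    then obtain a where a: "\<alpha> = ereal a" using assms by (cases \<alpha>) auto
    have "Cap z \<alpha> \<beta> = a" using 1 a by (simp add: Cap_def)
    moreover have "z < a" "a \<le> q" using 1 a assms by auto
    ultimately show ?thesis by linarith
  next
    case 2 thus ?thesis by (simp add: Cap_def)
  next
    case 3
    then obtain bb where a: "\<beta> = ereal bb" using assms by (cases \<beta>) auto
    have "Cap z \<alpha> \<beta> = bb" using 3 a by (simp add: Cap_def)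
    moreover have "z > bb" "q \<le> bb" using 3 a assms by auto
    ultimately show ?thesis by linarith
  qed
qed

definition gg :: "real \<Rightarrow> ereal \<Rightarrow> ereal \<Rightarrow> real \<Rightarrow> real" where
  "gg c \<alpha> \<beta> x = x^2 - (x - c * Cap (x/c) \<alpha> \<beta>)^2"

lemma inf_val:
  fixes c e w :: real
  assumes c: "c > 0" and ab: "\<alpha> < \<beta>"
  shows "(INF l\<in>UNIV. ereal (2 * c) * deltaK \<alpha> \<beta> l + ereal ((e + l + w)^2)) = ereal (gg c \<alpha> \<beta> (e + w))"
proof -
  define x where "x = e + w"
  define p where "p = c * Cap (x/c) \<alpha> \<beta>"
  have gx: "gg c \<alpha> \<beta> (e + w) = x^2 - (x - p)^2" unfolding gg_def x_def p_def by simp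
  have ci: "\<alpha> \<le> ereal (Cap (x/c) \<alpha> \<beta>)" "ereal (Cap (x/c) \<alpha> \<beta>) \<le> \<beta>" using cap_in[OF ab] by auto
  have lower: "ereal (x^2 - (x - p)^2) \<le> ereal (2 * c) * deltaK \<alpha> \<beta> l + ereal ((e + l + w)^2)" for l
  proof -
    consider "l > 0" | "l < 0" | "l = 0" by linarith
    then show ?thesis
    proof cases
      case 1
      show ?thesis
      proof (cases \<alpha>)
        case (real a)
        have "a \<le> Cap (x/c) \<alpha> \<beta>" using ci real by auto
        hence "c * a \<le> p" unfolding p_def using c by simp
        hence "0 \<le> (x + l - p)^2 + 2 * (p - c * a) * l" using 1 by (intro add_nonneg_nonneg) auto
        moreover have "(x + l - p)^2 + 2 * (p - c * a) * l = (2*c*(-a*l) + (x+l)^2) - (x^2 - (x - p)^2)"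
          by (simp add: power2_eq_square algebra_simps)
        ultimately have "x^2 - (x - p)^2 \<le> 2*c*(-a*l) + (e + l + w)^2" unfolding x_def by (simp add: algebra_simps)
        thus ?thesis using 1 real by (simp add: deltaK_def)
      next
        case PInf thus ?thesis using ab by simp
      next
        case MInf thus ?thesis using 1 c by (simp add: deltaK_def)
      qed
    next
      case 2
      show ?thesis
      proof (cases \<beta>)
        case (real bb)
        have "Cap (x/c) \<alpha> \<beta> \<le> bb" using ci real by auto
        hence "p \<le> c * bb" unfolding p_def using c by simp
        hence "0 \<le> (x + l - p)^2 + 2 * (p - c * bb) * l" using 2
          by (intro add_nonneg_nonneg) (auto simp: mult_nonpos_nonpos)
        moreover have "(x + l - p)^2 + 2 * (p - c * bb) * l = (2*c*(-bb*l) + (x+l)^2) - (x^2 - (x - p)^2)"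
          by (simp add: power2_eq_square algebra_simps)
        ultimately have "x^2 - (x - p)^2 \<le> 2*c*(-bb*l) + (e + l + w)^2" unfolding x_def by (simp add: algebra_simps)
        thus ?thesis using 2 real by (simp add: deltaK_def)
      next
        case MInf thus ?thesis using ab by simp
      next
        case PInf thus ?thesis using 2 c by (simp add: deltaK_def)
      qed
    next
      case 3
      thus ?thesis unfolding x_def by (simp add: deltaK_def)
    qed
  qed
  have attain: "ereal (2 * c) * deltaK \<alpha> \<beta> (p - x) + ereal ((e + (p - x) + w)^2) = ereal (x^2 - (x - p)^2)"
  proof -
    consider "ereal (x/c) < \<alpha>" | "\<not> ereal (x/c) < \<alpha>" "ereal (x/c) \<le> \<beta>" | "\<not> ereal (x/c) < \<alpha>" "\<not> ereal (x/c) \<le> \<beta>" by blast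
    then show ?thesis
    proof cases
      case 1
      then obtain a where a: "\<alpha> = ereal a" using ab by (cases \<alpha>) auto
      have pa: "p = c * a" using 1 a unfolding p_def by (simp add: Cap_def)
      have "x/c < a" using 1 a by simp
      hence "x < c * a" using c by (simp add: divide_less_eq mult.commute)
      hence "p - x > 0" using pa by simp
      moreover have "2*c*(-a*(p-x)) + (e + (p - x) + w)^2 = x^2 - (x - p)^2"
        unfolding pa x_def by (simp add: power2_eq_square algebra_simps)
      ultimately show ?thesis using a by (simp add: deltaK_def)
    next
      case 2 hence "p = x" unfolding p_def using c by (simp add: Cap_def)
      thus ?thesis unfolding x_def by (simp add: deltaK_def)
    next
      case 3
      then obtain bb where a: "\<beta> = ereal bb" using ab by (cases \<beta>) auto
      have pa: "p = c * bb" using 3 a unfolding p_def by (simp add: Cap_def)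
      have "x/c > bb" using 3 a by simp
      hence "x > c * bb" using c by (simp add: less_divide_eq mult.commute)
      hence "p - x < 0" using pa by simp
      moreover have "2*c*(-bb*(p-x)) + (e + (p - x) + w)^2 = x^2 - (x - p)^2"
        unfolding pa x_def by (simp add: power2_eq_square algebra_simps)
      ultimately show ?thesis using a by (simp add: deltaK_def)
    qed
  qed
  show ?thesis unfolding gx
  proof (rule antisym)
    show "(INF l\<in>UNIV. ereal (2 * c) * deltaK \<alpha> \<beta> l + ereal ((e + l + w)^2)) \<le> ereal (x^2 - (x - p)^2)"
      by (rule INF_lower2[of "p - x"]) (use attain in auto)
    show "ereal (x^2 - (x - p)^2) \<le> (INF l\<in>UNIV. ereal (2 * c) * deltaK \<alpha> \<beta> l + ereal ((e + l + w)^2))"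
      by (rule INF_greatest) (use lower in auto)
  qed
qed

lemma pistar_cap:
  assumes b: "b < 1" and s: "\<sigma> > 0" and ab: "\<alpha> < \<beta>"
  shows "1 / (1 - b) * (\<eta> + lambda_star b \<eta> \<sigma> \<rho> \<alpha> \<beta> y + \<sigma> * \<rho> * y) = Cap ((\<eta> + \<sigma> * \<rho> * y) / (1 - b)) \<alpha> \<beta>"
proof -
  define c where "c = 1 - b"
  have c: "c > 0" using b unfolding c_def by simp
  define x where "x = \<eta> + \<sigma> * \<rho> * y"
  have lt: "ereal (\<rho> * y) < (ereal c * ereal a - ereal \<eta>) / ereal \<sigma> \<longleftrightarrow> x / c < a" for a
  proof -
    have "ereal (\<rho> * y) < (ereal c * ereal a - ereal \<eta>) / ereal \<sigma> \<longleftrightarrow> \<rho> * y < (c * a - \<eta>) / \<sigma>"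
      using s by simp
    also have "\<dots> \<longleftrightarrow> \<sigma> * (\<rho> * y) < c * a - \<eta>" using s by (simp add: less_divide_eq mult.commute)
    also have "\<dots> \<longleftrightarrow> x < c * a" unfolding x_def by (simp add: algebra_simps)
    also have "\<dots> \<longleftrightarrow> x / c < a" using c by (simp add: divide_less_eq mult.commute)
    finally show ?thesis .
  qed
  have gt: "(ereal c * ereal a - ereal \<eta>) / ereal \<sigma> < ereal (\<rho> * y) \<longleftrightarrow> a < x / c" for a
  proof -
    have "(ereal c * ereal a - ereal \<eta>) / ereal \<sigma> < ereal (\<rho> * y) \<longleftrightarrow> (c * a - \<eta>) / \<sigma> < \<rho> * y"
      using s by simp
    also have "\<dots> \<longleftrightarrow> c * a - \<eta> < \<sigma> * (\<rho> * y)" using s by (simp add: divide_less_eq mult.commute)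
    also have "\<dots> \<longleftrightarrow> c * a < x" unfolding x_def by (simp add: algebra_simps)
    also have "\<dots> \<longleftrightarrow> a < x / c" using c by (simp add: less_divide_eq mult.commute)
    finally show ?thesis .
  qed
  have mi: "(ereal c * (-\<infinity>) - ereal \<eta>) / ereal \<sigma> = -\<infinity>" using c s
    by (simp add: divide_ereal_def)
  have pi: "(ereal c * \<infinity> - ereal \<eta>) / ereal \<sigma> = \<infinity>" using c s
    by (simp add: divide_ereal_def)
  have L1: "ereal (\<rho> * y) < B_minus b \<eta> \<sigma> \<alpha> \<longleftrightarrow> ereal (x / c) < \<alpha>"
  proof (cases \<alpha>)
    case (real a) show ?thesis unfolding B_minus_def c_def[symmetric] real lt by simp
  next
    case PInf thus ?thesis using ab by simp
  next
    case MInf show ?thesis unfolding B_minus_def c_def[symmetric] MInf mi by simp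
  qed
  have L2: "B_plus b \<eta> \<sigma> \<beta> < ereal (\<rho> * y) \<longleftrightarrow> \<beta> < ereal (x / c)"
  proof (cases \<beta>)
    case (real a) show ?thesis unfolding B_plus_def c_def[symmetric] real gt by simp
  next
    case MInf thus ?thesis using ab by simp
  next
    case PInf show ?thesis unfolding B_plus_def c_def[symmetric] PInf pi by simp
  qed
  have lsd: "lambda_star b \<eta> \<sigma> \<rho> \<alpha> \<beta> y =
     (if ereal (x / c) < \<alpha> then real_of_ereal (ereal c * \<alpha>) - x else 0)
     + (if \<beta> < ereal (x / c) then real_of_ereal (ereal c * \<beta>) - x else 0)"
    unfolding lambda_star_def L1 L2 c_def[symmetric] x_def by simp
  consider "ereal (x/c) < \<alpha>" | "\<not> ereal (x/c) < \<alpha>" "ereal (x/c) \<le> \<beta>" | "\<not> ereal (x/c) < \<alpha>" "\<not> ereal (x/c) \<le> \<beta>" by blast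
  then show ?thesis
  proof cases
    case 1
    then obtain a where a: "\<alpha> = ereal a" using ab by (cases \<alpha>) auto
    have "\<not> \<beta> < ereal (x / c)" using 1 ab by auto
    thus ?thesis using 1 c a unfolding lsd c_def[symmetric] x_def[symmetric]
      by (simp add: Cap_def x_def field_simps)
  next
    case 2
    have "\<not> \<beta> < ereal (x / c)" using 2 by auto
    thus ?thesis using 2 c unfolding lsd c_def[symmetric] x_def[symmetric]
      by (simp add: Cap_def x_def field_simps)
  next
    case 3
    then obtain bb where a: "\<beta> = ereal bb" using ab by (cases \<beta>) auto
    have "\<not> ereal (x / c) < \<alpha>" using 3 ab by auto
    thus ?thesis using 3 c a unfolding lsd c_def[symmetric] x_def[symmetric]
      by (simp add: Cap_def x_def field_simps)
  qed
qed

lemma cap_hi: "\<alpha> < ereal bb \<Longrightarrow> bb \<le> z \<Longrightarrow> Cap z \<alpha> (ereal bb) = bb"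
  unfolding Cap_def by (cases \<alpha>) auto

lemma cap_lo: "ereal a < \<beta> \<Longrightarrow> z \<le> a \<Longrightarrow> Cap z (ereal a) \<beta> = a"
  unfolding Cap_def by (cases \<beta>) auto

lemma loclip_const: "loclip (\<lambda>x. a)"
  unfolding loclip_def by (intro allI exI[of _ 0]) auto

lemma loclip_id: "loclip (\<lambda>x. x)"
  unfolding loclip_def by (intro allI exI[of _ 1]) auto

lemma loclip_sq: "loclip (\<lambda>x. x^2)"
  unfolding loclip_def
proof (intro allI exI[of _ "2 * _"] impI)
  fix M u v :: real assume "\<bar>u\<bar> \<le> M" "\<bar>v\<bar> \<le> M"
  have "\<bar>u^2 - v^2\<bar> = \<bar>u + v\<bar> * \<bar>u - v\<bar>" by (simp add: power2_eq_square algebra_simps abs_mult[symmetric])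
  also have "\<dots> \<le> (2 * M) * \<bar>u - v\<bar>"
    using \<open>\<bar>u\<bar> \<le> M\<close> \<open>\<bar>v\<bar> \<le> M\<close> by (intro mult_right_mono) auto
  finally show "\<bar>u^2 - v^2\<bar> \<le> (2 * M) * \<bar>u - v\<bar>" .
qed

lemma loclip_add:
  assumes "loclip F" "loclip G" shows "loclip (\<lambda>x. F x + G x)"
  unfolding loclip_def
proof
  fix M
  obtain L1 where L1: "\<And>u v. \<bar>u\<bar> \<le> M \<Longrightarrow> \<bar>v\<bar> \<le> M \<Longrightarrow> \<bar>F u - F v\<bar> \<le> L1 * \<bar>u - v\<bar>"
    using assms(1) unfolding loclip_def by blast
  obtain L2 where L2: "\<And>u v. \<bar>u\<bar> \<le> M \<Longrightarrow> \<bar>v\<bar> \<le> M \<Longrightarrow> \<bar>G u - G v\<bar> \<le> L2 * \<bar>u - v\<bar>"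
    using assms(2) unfolding loclip_def by blast
  show "\<exists>L. \<forall>u v. \<bar>u\<bar> \<le> M \<longrightarrow> \<bar>v\<bar> \<le> M \<longrightarrow> \<bar>F u + G u - (F v + G v)\<bar> \<le> L * \<bar>u - v\<bar>"
  proof (intro exI[of _ "L1 + L2"] allI impI)
    fix u v assume uv: "\<bar>u\<bar> \<le> M" "\<bar>v\<bar> \<le> M"
    have "\<bar>F u + G u - (F v + G v)\<bar> \<le> \<bar>F u - F v\<bar> + \<bar>G u - G v\<bar>" by linarith
    also have "\<dots> \<le> L1 * \<bar>u - v\<bar> + L2 * \<bar>u - v\<bar>" using L1[OF uv] L2[OF uv] by linarith
    finally show "\<bar>F u + G u - (F v + G v)\<bar> \<le> (L1 + L2) * \<bar>u - v\<bar>" by (simp add: algebra_simps)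
  qed
qed

lemma loclip_cmult:
  assumes "loclip F" shows "loclip (\<lambda>x. a * F x)"
  unfolding loclip_def
proof
  fix M
  obtain L1 where L1: "\<And>u v. \<bar>u\<bar> \<le> M \<Longrightarrow> \<bar>v\<bar> \<le> M \<Longrightarrow> \<bar>F u - F v\<bar> \<le> L1 * \<bar>u - v\<bar>"
    using assms(1) unfolding loclip_def by blast
  show "\<exists>L. \<forall>u v. \<bar>u\<bar> \<le> M \<longrightarrow> \<bar>v\<bar> \<le> M \<longrightarrow> \<bar>a * F u - a * F v\<bar> \<le> L * \<bar>u - v\<bar>"
  proof (intro exI[of _ "\<bar>a\<bar> * L1"] allI impI)
    fix u v assume uv: "\<bar>u\<bar> \<le> M" "\<bar>v\<bar> \<le> M"
    have "\<bar>a * F u - a * F v\<bar> = \<bar>a\<bar> * \<bar>F u - F v\<bar>" by (simp add: abs_mult[symmetric] algebra_simps)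
    also have "\<dots> \<le> \<bar>a\<bar> * (L1 * \<bar>u - v\<bar>)" using L1[OF uv] by (intro mult_left_mono) auto
    finally show "\<bar>a * F u - a * F v\<bar> \<le> \<bar>a\<bar> * L1 * \<bar>u - v\<bar>" by (simp add: algebra_simps)
  qed
qed

lemma loclip_aff:
  assumes "loclip F" shows "loclip (\<lambda>x. F (a * x + d))"
  unfolding loclip_def
proof
  fix M
  obtain L1 where L1: "\<And>u v. \<bar>u\<bar> \<le> \<bar>a\<bar> * \<bar>M\<bar> + \<bar>d\<bar> \<Longrightarrow> \<bar>v\<bar> \<le> \<bar>a\<bar> * \<bar>M\<bar> + \<bar>d\<bar> \<Longrightarrow> \<bar>F u - F v\<bar> \<le> L1 * \<bar>u - v\<bar>"
    using assms(1) unfolding loclip_def by blast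
  show "\<exists>L. \<forall>u v. \<bar>u\<bar> \<le> M \<longrightarrow> \<bar>v\<bar> \<le> M \<longrightarrow> \<bar>F (a * u + d) - F (a * v + d)\<bar> \<le> L * \<bar>u - v\<bar>"
  proof (intro exI[of _ "L1 * \<bar>a\<bar>"] allI impI)
    fix u v assume uv: "\<bar>u\<bar> \<le> M" "\<bar>v\<bar> \<le> M"
    have b: "\<bar>a * w + d\<bar> \<le> \<bar>a\<bar> * \<bar>M\<bar> + \<bar>d\<bar>" if "\<bar>w\<bar> \<le> M" for w
    proof -
      have "\<bar>a * w\<bar> \<le> \<bar>a\<bar> * \<bar>M\<bar>" using that by (simp add: abs_mult mult_left_mono)
      thus ?thesis by linarith
    qed
    have "\<bar>F (a * u + d) - F (a * v + d)\<bar> \<le> L1 * \<bar>(a * u + d) - (a * v + d)\<bar>"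
      using L1[OF b[OF uv(1)] b[OF uv(2)]] .
    also have "\<bar>(a * u + d) - (a * v + d)\<bar> = \<bar>a\<bar> * \<bar>u - v\<bar>" by (simp add: abs_mult[symmetric] algebra_simps)
    finally show "\<bar>F (a * u + d) - F (a * v + d)\<bar> \<le> L1 * \<bar>a\<bar> * \<bar>u - v\<bar>" by (simp add: algebra_simps)
  qed
qed

lemma gg_up:
  assumes c: "c > 0" and ab: "\<alpha> < \<beta>"
  shows "gg c \<alpha> \<beta> u - gg c \<alpha> \<beta> v \<le> 2 * (c * Cap (u/c) \<alpha> \<beta>) * (u - v)"
proof -
  define pu where "pu = c * Cap (u/c) \<alpha> \<beta>"
  define pv where "pv = c * Cap (v/c) \<alpha> \<beta>"
  have ci: "\<alpha> \<le> ereal (Cap (u/c) \<alpha> \<beta>)" "ereal (Cap (u/c) \<alpha> \<beta>) \<le> \<beta>" using cap_in[OF ab] by auto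
  have n: "(v/c - Cap (v/c) \<alpha> \<beta>)^2 \<le> (v/c - Cap (u/c) \<alpha> \<beta>)^2"
    by (rule cap_near[OF ab ci])
  have "(v - pv)^2 = c^2 * (v/c - Cap (v/c) \<alpha> \<beta>)^2" unfolding pv_def using c
    by (simp add: power2_eq_square field_simps)
  also have "\<dots> \<le> c^2 * (v/c - Cap (u/c) \<alpha> \<beta>)^2" using n by (intro mult_left_mono) auto
  also have "\<dots> = (v - pu)^2" unfolding pu_def using c by (simp add: power2_eq_square field_simps)
  finally have "(v - pv)^2 \<le> (v - pu)^2" .
  moreover have "gg c \<alpha> \<beta> u - gg c \<alpha> \<beta> v - 2 * pu * (u - v) = (v - pv)^2 - (v - pu)^2"
    unfolding gg_def pu_def[symmetric] pv_def[symmetric] by (simp add: power2_eq_square algebra_simps)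
  ultimately show ?thesis unfolding pu_def by linarith
qed

lemma loclip_gg:
  assumes c: "c > 0" and ab: "\<alpha> < \<beta>" and q: "\<alpha> \<le> ereal q" "ereal q \<le> \<beta>"
  shows "loclip (gg c \<alpha> \<beta>)"
  unfolding loclip_def
proof (intro allI exI[of _ "2 * (_ + c * \<bar>q\<bar>)"] impI)
  fix M u v :: real assume uv: "\<bar>u\<bar> \<le> M" "\<bar>v\<bar> \<le> M"
  have pb: "\<bar>c * Cap (w/c) \<alpha> \<beta>\<bar> \<le> M + c * \<bar>q\<bar>" if "\<bar>w\<bar> \<le> M" for w :: real
  proof -
    have "\<bar>Cap (w/c) \<alpha> \<beta>\<bar> \<le> \<bar>w/c\<bar> + \<bar>q\<bar>" by (rule cap_bnd[OF ab q])
    hence "c * \<bar>Cap (w/c) \<alpha> \<beta>\<bar> \<le> c * (\<bar>w/c\<bar> + \<bar>q\<bar>)" using c by (intro mult_left_mono) auto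
    also have "\<dots> = \<bar>w\<bar> + c * \<bar>q\<bar>" using c by (simp add: abs_div algebra_simps)
    finally show ?thesis using c that by (simp add: abs_mult)
  qed
  have k: "2 * p * (x - y) \<le> 2 * (M + c * \<bar>q\<bar>) * \<bar>x - y\<bar>" if "\<bar>p\<bar> \<le> M + c * \<bar>q\<bar>" for p x y :: real
  proof -
    have "p * (x - y) \<le> \<bar>p\<bar> * \<bar>x - y\<bar>" by (metis abs_ge_self abs_mult)
    also have "\<dots> \<le> (M + c * \<bar>q\<bar>) * \<bar>x - y\<bar>" using that by (intro mult_right_mono) auto
    finally show ?thesis by linarith
  qed
  have 1: "gg c \<alpha> \<beta> u - gg c \<alpha> \<beta> v \<le> 2 * (M + c * \<bar>q\<bar>) * \<bar>u - v\<bar>"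
    using gg_up[OF c ab, of u v] k[OF pb[OF uv(1)], of u v] by linarith
  have 2: "gg c \<alpha> \<beta> v - gg c \<alpha> \<beta> u \<le> 2 * (M + c * \<bar>q\<bar>) * \<bar>u - v\<bar>"
    using gg_up[OF c ab, of v u] k[OF pb[OF uv(2)], of v u] by (simp add: abs_minus_commute)
  show "\<bar>gg c \<alpha> \<beta> u - gg c \<alpha> \<beta> v\<bar> \<le> 2 * (M + c * \<bar>q\<bar>) * \<bar>u - v\<bar>"
    using 1 2 by linarith
qed

theorem lemma2p9:
  fixes T \<eta> \<kappa> \<sigma> \<rho> b :: real and \<alpha> \<beta> :: ereal
    and B Bu :: "real \<Rightarrow> real"
  assumes "T > 0" and "\<eta> > 0" and "\<kappa> > 0" and "\<sigma> > 0"
    and "-1 < \<rho>" and "\<rho> < 1" and "b < 1" and "b \<noteq> 0"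
    and "\<alpha> < \<beta>"
    and "B 0 = 0"
    and "\<And>\<tau>. \<tau> \<in> {0..T} \<Longrightarrow>
           (B has_real_derivative constr_rhs b \<eta> \<kappa> \<sigma> \<rho> \<alpha> \<beta> (B \<tau>)) (at \<tau> within {0..T})"
    and "Bu 0 = 0"
    and "\<And>\<tau>. \<tau> \<in> {0..T} \<Longrightarrow>
           (Bu has_real_derivative unconstr_rhs b \<eta> \<kappa> \<sigma> \<rho> (Bu \<tau>)) (at \<tau> within {0..T})"
    and "\<rho> = 0 \<or> (\<alpha> \<le> ereal (pi_M b \<eta>) \<and> ereal (pi_M b \<eta>) \<le> \<beta>)"
  shows "\<forall>t\<in>{0..T}. pi_star b \<eta> \<sigma> \<rho> \<alpha> \<beta> T B t = Cap (pi_u b \<eta> \<sigma> \<rho> T Bu t) \<alpha> \<beta>"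
proof -
  note T0 = assms(1) and eta = assms(2) and sig = assms(4) and b1 = assms(7) and ab = assms(9)
    and B0 = assms(10) and dB = assms(11) and Bu0 = assms(12) and dBu = assms(13) and hyp = assms(14)
  have c: "1 - b > 0" using b1 by simp
  have pis: "pi_star b \<eta> \<sigma> \<rho> \<alpha> \<beta> T B t = Cap ((\<eta> + \<sigma> * \<rho> * B (T - t)) / (1 - b)) \<alpha> \<beta>" for t
    unfolding pi_star_def using pistar_cap[OF b1 sig ab] by simp
  have piu: "pi_u b \<eta> \<sigma> \<rho> T Bu t = (\<eta> + \<sigma> * \<rho> * Bu (T - t)) / (1 - b)" for t
    unfolding pi_u_def by simp
  show ?thesis
  proof (cases "\<rho> = 0")
    case True
    thus ?thesis unfolding pis piu by simp
  next
    case False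
    hence ae: "\<alpha> \<le> ereal (\<eta> / (1 - b))" "ereal (\<eta> / (1 - b)) \<le> \<beta>" using hyp unfolding pi_M_def by auto
    have sr: "\<sigma> * \<rho> \<noteq> 0" using False sig by simp
    define X where "X \<tau> = \<eta> + \<sigma> * \<rho> * B \<tau>" for \<tau>
    define Xu where "Xu \<tau> = \<eta> + \<sigma> * \<rho> * Bu \<tau>" for \<tau>
    define f where "f y = - \<kappa> * y + 1/2 * \<sigma>^2 * y^2 + 1/2 * (b / (1 - b)) * gg (1 - b) \<alpha> \<beta> (\<sigma> * \<rho> * y + \<eta>)" for y
    have cr: "constr_rhs b \<eta> \<kappa> \<sigma> \<rho> \<alpha> \<beta> y = f y" for y
      unfolding constr_rhs_def f_def inf_val[OF c ab] by (simp add: add.commute)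
    define a0 where "a0 = 1 / (\<sigma> * \<rho>)"
    define d0 where "d0 = - \<eta> / (\<sigma> * \<rho>)"
    have inv: "a0 * (\<eta> + \<sigma> * \<rho> * y) + d0 = y" for y
      unfolding a0_def d0_def using sr by (simp add: field_simps)
    have inv2: "\<sigma> * \<rho> * (a0 * x + d0) + \<eta> = x" for x
      unfolding a0_def d0_def using sr by (simp add: field_simps)
    define F where "F x = \<sigma> * \<rho> * f (a0 * x + d0)" for x
    define G where "G x = \<sigma> * \<rho> * unconstr_rhs b \<eta> \<kappa> \<sigma> \<rho> (a0 * x + d0)" for x
    have dX: "(X has_real_derivative F (X \<tau>)) (at \<tau> within {0..T})" if "\<tau> \<in> {0..T}" for \<tau>
    proof -
      have "((\<lambda>\<tau>. \<eta> + \<sigma> * \<rho> * B \<tau>) has_real_derivative 0 + \<sigma> * \<rho> * constr_rhs b \<eta> \<kappa> \<sigma> \<rho> \<alpha> \<beta> (B \<tau>)) (at \<tau> within {0..T})"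
        by (intro DERIV_add DERIV_const DERIV_cmult dB that)
      moreover have "F (X \<tau>) = 0 + \<sigma> * \<rho> * constr_rhs b \<eta> \<kappa> \<sigma> \<rho> \<alpha> \<beta> (B \<tau>)"
        unfolding F_def X_def inv cr by simp
      ultimately show ?thesis unfolding X_def[abs_def] by simp
    qed
    have dXu: "(Xu has_real_derivative G (Xu \<tau>)) (at \<tau> within {0..T})" if "\<tau> \<in> {0..T}" for \<tau>
    proof -
      have "((\<lambda>\<tau>. \<eta> + \<sigma> * \<rho> * Bu \<tau>) has_real_derivative 0 + \<sigma> * \<rho> * unconstr_rhs b \<eta> \<kappa> \<sigma> \<rho> (Bu \<tau>)) (at \<tau> within {0..T})"
        by (intro DERIV_add DERIV_const DERIV_cmult dBu that)
      moreover have "G (Xu \<tau>) = 0 + \<sigma> * \<rho> * unconstr_rhs b \<eta> \<kappa> \<sigma> \<rho> (Bu \<tau>)"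
        unfolding G_def Xu_def inv by simp
      ultimately show ?thesis unfolding Xu_def[abs_def] by simp
    qed
    have lgg: "loclip (gg (1 - b) \<alpha> \<beta>)" by (rule loclip_gg[OF c ab ae])
    have lf: "loclip f"
    proof -
      have "loclip (\<lambda>y. (- \<kappa>) * (\<lambda>y. y) y + (1/2 * \<sigma>^2) * (\<lambda>y. y^2) y + (1/2 * (b / (1 - b))) * (\<lambda>y. gg (1 - b) \<alpha> \<beta> (\<sigma> * \<rho> * y + \<eta>)) y)"
        by (intro loclip_add loclip_cmult loclip_id loclip_sq loclip_aff[OF lgg])
      thus ?thesis unfolding f_def[abs_def] by simp
    qed
    have lF: "loclip F"
    proof -
      have "loclip (\<lambda>x. (\<sigma> * \<rho>) * (\<lambda>x. f (a0 * x + d0)) x)"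
        by (intro loclip_cmult loclip_aff[OF lf])
      thus ?thesis unfolding F_def[abs_def] by simp
    qed
    have lu: "loclip (unconstr_rhs b \<eta> \<kappa> \<sigma> \<rho>)"
    proof -
      have "loclip (\<lambda>y. (\<lambda>y. - r0 b \<eta>) y + (r1 b \<eta> \<sigma> \<rho> \<kappa>) * (\<lambda>y. y) y + (1/2 * r2 b \<sigma> \<rho>) * (\<lambda>y. y^2) y)"
        by (intro loclip_add loclip_cmult loclip_id loclip_sq loclip_const)
      thus ?thesis unfolding unconstr_rhs_def[abs_def] by (simp add: mult.assoc)
    qed
    have lG: "loclip G"
    proof -
      have "loclip (\<lambda>x. (\<sigma> * \<rho>) * (\<lambda>x. unconstr_rhs b \<eta> \<kappa> \<sigma> \<rho> (a0 * x + d0)) x)"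
        by (intro loclip_cmult loclip_aff[OF lu])
      thus ?thesis unfolding G_def[abs_def] by simp
    qed
    have cX: "continuous_on {0..T} X" using dX by (rule DERIV_continuous_on)
    have cXu: "continuous_on {0..T} Xu" using dXu by (rule DERIV_continuous_on)
    have "continuous_on {0..T} (\<lambda>t. \<bar>X t\<bar> + \<bar>Xu t\<bar>)" using cX cXu by (intro continuous_intros)
    then obtain tm where tm: "tm \<in> {0..T}" "\<And>t. t \<in> {0..T} \<Longrightarrow> \<bar>X t\<bar> + \<bar>Xu t\<bar> \<le> \<bar>X tm\<bar> + \<bar>Xu tm\<bar>"
      using continuous_attains_sup[of "{0..T}" "\<lambda>t. \<bar>X t\<bar> + \<bar>Xu t\<bar>"] T0 by auto
    define M where "M = \<bar>X tm\<bar> + \<bar>Xu tm\<bar>"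
    have bnd: "\<bar>X t\<bar> \<le> M \<and> \<bar>Xu t\<bar> \<le> M" if "t \<in> {0..T}" for t
      using tm(2)[OF that] abs_ge_zero[of "X t"] abs_ge_zero[of "Xu t"] unfolding M_def by linarith
    have X0: "X 0 = \<eta>" "Xu 0 = \<eta>" unfolding X_def Xu_def using B0 Bu0 by auto
    have etaM: "\<eta> \<le> M" using bnd[of 0] X0 T0 by auto
    define lo where "lo = (if \<alpha> = -\<infinity> then -(M+1) else (1 - b) * real_of_ereal \<alpha>)"
    define hi where "hi = (if \<beta> = \<infinity> then M+1 else (1 - b) * real_of_ereal \<beta>)"
    have loeta: "lo \<le> \<eta>"
    proof (cases "\<alpha> = -\<infinity>")
      case True thus ?thesis unfolding lo_def using etaM eta by simp
    next
      case False
      then obtain a where a: "\<alpha> = ereal a" using ab by (cases \<alpha>) auto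
      hence "a \<le> \<eta> / (1 - b)" using ae by simp
      thus ?thesis unfolding lo_def a using c by (simp add: le_divide_eq mult.commute)
    qed
    have etahi: "\<eta> \<le> hi"
    proof (cases "\<beta> = \<infinity>")
      case True thus ?thesis unfolding hi_def using etaM eta by simp
    next
      case False
      then obtain a where a: "\<beta> = ereal a" using ab by (cases \<beta>) auto
      hence "\<eta> / (1 - b) \<le> a" using ae by simp
      thus ?thesis unfolding hi_def a using c by (simp add: divide_le_eq mult.commute)
    qed
    have lohi: "lo < hi"
    proof (cases "\<alpha> = -\<infinity> \<or> \<beta> = \<infinity>")
      case True
      thus ?thesis using loeta etahi etaM eta unfolding lo_def hi_def by auto
    next
      case False
      then obtain a bb where a: "\<alpha> = ereal a" "\<beta> = ereal bb" using ab by (cases \<alpha>; cases \<beta>) auto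
      hence "a < bb" using ab by simp
      thus ?thesis unfolding lo_def hi_def a using c by simp
    qed
    have FG: "F x = G x" if x: "lo \<le> x" "x \<le> hi" for x
    proof -
      define y where "y = a0 * x + d0"
      have xy: "x = \<sigma> * \<rho> * y + \<eta>" unfolding y_def inv2 ..
      have al: "\<alpha> \<le> ereal (x / (1 - b))"
      proof (cases "\<alpha> = -\<infinity>")
        case False
        then obtain a where a: "\<alpha> = ereal a" using ab by (cases \<alpha>) auto
        hence "(1 - b) * a \<le> x" using x unfolding lo_def by simp
        thus ?thesis unfolding a using c by (simp add: le_divide_eq mult.commute)
      qed simp
      have be: "ereal (x / (1 - b)) \<le> \<beta>"
      proof (cases "\<beta> = \<infinity>")
        case False
        then obtain a where a: "\<beta> = ereal a" using ab by (cases \<beta>) auto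
        hence "x \<le> (1 - b) * a" using x unfolding hi_def by simp
        thus ?thesis unfolding a using c by (simp add: divide_le_eq mult.commute)
      qed simp
      have "gg (1 - b) \<alpha> \<beta> x = x^2" unfolding gg_def cap_id[OF al be] using c by simp
      hence "f y = - \<kappa> * y + 1/2 * \<sigma>^2 * y^2 + 1/2 * (b / (1 - b)) * (\<sigma> * \<rho> * y + \<eta>)^2"
        unfolding f_def xy by simp
      also have "\<dots> = unconstr_rhs b \<eta> \<kappa> \<sigma> \<rho> y"
        unfolding unconstr_rhs_def r0_def r1_def r2_def
      proof -
        define k where "k = b / (1 - b)"
        have e: "- b / (2 * (1 - b)) = - k / 2" unfolding k_def by simp
        show "- \<kappa> * y + 1/2 * \<sigma>^2 * y^2 + 1/2 * (b / (1 - b)) * (\<sigma> * \<rho> * y + \<eta>)^2 =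
          - (- b / (2 * (1 - b)) * \<eta>^2) + (b / (1 - b) * \<eta> * \<sigma> * \<rho> - \<kappa>) * y + 1/2 * (\<sigma>^2 * (1 + b / (1 - b) * \<rho>^2)) * y^2"
          unfolding e k_def[symmetric] by (simp add: power2_eq_square algebra_simps)
      qed
      finally show ?thesis unfolding F_def G_def y_def by simp
    qed
    have tri: "\<forall>t\<in>{0..T}. (X t = Xu t \<and> lo \<le> Xu t \<and> Xu t \<le> hi) \<or> (hi \<le> X t \<and> hi \<le> Xu t) \<or> (X t \<le> lo \<and> Xu t \<le> lo)"
      by (rule core[where F = F and G = G]) (use T0 lohi X0 loeta etahi dX dXu FG lF lG in auto)
    show ?thesis
    proof
      fix t assume t: "t \<in> {0..T}"
      define \<tau> where "\<tau> = T - t"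
      have tau: "\<tau> \<in> {0..T}" using t unfolding \<tau>_def by auto
      have goal: "pi_star b \<eta> \<sigma> \<rho> \<alpha> \<beta> T B t = Cap (pi_u b \<eta> \<sigma> \<rho> T Bu t) \<alpha> \<beta>
          \<longleftrightarrow> Cap (X \<tau> / (1 - b)) \<alpha> \<beta> = Cap (Xu \<tau> / (1 - b)) \<alpha> \<beta>"
        unfolding pis piu X_def Xu_def \<tau>_def ..
      have bt: "\<bar>X \<tau>\<bar> \<le> M" "\<bar>Xu \<tau>\<bar> \<le> M" using bnd[OF tau] by auto
      consider "X \<tau> = Xu \<tau>" | "hi \<le> X \<tau>" "hi \<le> Xu \<tau>" | "X \<tau> \<le> lo" "Xu \<tau> \<le> lo"
        using tri tau by blast
      then show "pi_star b \<eta> \<sigma> \<rho> \<alpha> \<beta> T B t = Cap (pi_u b \<eta> \<sigma> \<rho> T Bu t) \<alpha> \<beta>"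
      proof cases
        case 1 thus ?thesis unfolding goal by simp
      next
        case 2
        have "\<beta> \<noteq> \<infinity>" using 2 bt unfolding hi_def by (auto split: if_splits)
        then obtain bb where bb: "\<beta> = ereal bb" using ab by (cases \<beta>) auto
        have h: "hi = (1 - b) * bb" unfolding hi_def bb by simp
        have "bb \<le> X \<tau> / (1 - b)" "bb \<le> Xu \<tau> / (1 - b)" using 2 c unfolding h
          by (simp_all add: le_divide_eq mult.commute)
        thus ?thesis unfolding goal using cap_hi[of \<alpha> bb] ab bb by simp
      next
        case 3
        have "\<alpha> \<noteq> -\<infinity>" using 3 bt unfolding lo_def by (auto split: if_splits)
        then obtain a where a: "\<alpha> = ereal a" using ab by (cases \<alpha>) auto
        have h: "lo = (1 - b) * a" unfolding lo_def a by simp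
        have "X \<tau> / (1 - b) \<le> a" "Xu \<tau> / (1 - b) \<le> a" using 3 c unfolding h
          by (simp_all add: divide_le_eq mult.commute)
        thus ?thesis unfolding goal using cap_lo[of a \<beta>] ab a by simp
      qed
    qed
  qed
qed

end
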